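(* Let $K$ be a field of characteristic $0$ and let $f\in K[[x_1,x_2]]$ be D-finite over $K(x_1,x_2)$, with non-zero annihilators $L_1\in K[x_1,x_2]\langle D_{x_1}\rangle$ and $L_2\in K[x_1,x_2]\langle D_{x_2}\rangle$ of orders at most $r_f$ and degrees at most $d_f$. Let $L=\sum_{i+j\le r_L}l_{i,j}(x_1,x_2)D_{x_1}^iD_{x_2}^j\in K[x_1,x_2]\langle D_{x_1},D_{x_2}\rangle$ be an operator of (total) order $r_L$ whose coefficients have total degree at most $d_L$, and let $g=L(f)$. Then there exist non-zero operators $A_1\in K[x_1,x_2]\langle D_{x_1}\rangle$ and $A_2\in K[x_1,x_2]\langle D_{x_2}\rangle$ with $A_1(g)=A_2(g)=0$, each of order $r_g\le r_f^2$ and degree $d_g\le (d_L+2d_f(r_f^2+r_L))\,r_f^2$.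
   Context: A series is D-finite over $K(x_1,x_2)$ if the $K(x_1,x_2)$-space spanned by all its partial derivatives is finite-dimensional. For an operator $\sum_{j=0}^r\ell_jD_{x_i}^j$ with polynomial coefficients and $\ell_r\ne0$, the order is $r$ and the degree is the maximal total degree of the coefficients $\ell_j$. *)

theory Defs
  imports "HOL-Computational_Algebra.Computational_Algebra"
begin

text \<open>Bivariate polynomials K[x1,x2] are rendered as 'a poly poly: the outer
variable is x2, the coefficients are polynomials in x1.
Bivariate power series K[[x1,x2]] are rendered as 'a fps fps: the outer
variable is x2, the coefficients are power series in x1.\<close>

type_synonym 'a bipoly = "'a poly poly"
type_synonym 'a bifps = "'a fps fps"

definition tdeg :: "'a::zero bipoly \<Rightarrow> nat" where
  "tdeg p = Max ({i + degree (coeff p i) | i. i \<le> degree p \<and> coeff p i \<noteq> 0} \<union> {0})"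

definition bi_of_poly :: "'a::comm_ring_1 bipoly \<Rightarrow> 'a bifps" where
  "bi_of_poly p = fps_of_poly (map_poly fps_of_poly p)"

definition Dx1 :: "'a::comm_ring_1 bifps \<Rightarrow> 'a bifps" where
  "Dx1 F = Abs_fps (\<lambda>n. fps_deriv (F $ n))"

definition Dx2 :: "'a::comm_ring_1 bifps \<Rightarrow> 'a bifps" where
  "Dx2 F = fps_deriv F"

text \<open>Operators in K[x1,x2]<D_xk> are given by their coefficient sequences
l :: nat \<Rightarrow> 'a bipoly (coefficient of D^j); order at most r means l j = 0 for j > r.\<close>
definition apply_op1 :: "(nat \<Rightarrow> 'a::comm_ring_1 bipoly) \<Rightarrow> nat \<Rightarrow> 'a bifps \<Rightarrow> 'a bifps" where
  "apply_op1 l r F = (\<Sum>j\<le>r. bi_of_poly (l j) * (Dx1 ^^ j) F)"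

definition apply_op2 :: "(nat \<Rightarrow> 'a::comm_ring_1 bipoly) \<Rightarrow> nat \<Rightarrow> 'a bifps \<Rightarrow> 'a bifps" where
  "apply_op2 l r F = (\<Sum>j\<le>r. bi_of_poly (l j) * (Dx2 ^^ j) F)"

definition ord_deg_bounded :: "(nat \<Rightarrow> 'a::zero bipoly) \<Rightarrow> nat \<Rightarrow> nat \<Rightarrow> bool" where
  "ord_deg_bounded l r d \<longleftrightarrow> (\<forall>j>r. l j = 0) \<and> (\<forall>j. tdeg (l j) \<le> d)"

definition nonzero_op :: "(nat \<Rightarrow> 'a::zero bipoly) \<Rightarrow> bool" where
  "nonzero_op l \<longleftrightarrow> (\<exists>j. l j \<noteq> 0)"

definition apply_op12 :: "(nat \<Rightarrow> nat \<Rightarrow> 'a::comm_ring_1 bipoly) \<Rightarrow> nat \<Rightarrow> 'a bifps \<Rightarrow> 'a bifps" where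
  "apply_op12 l r F = (\<Sum>(i,j)\<in>{(i,j). i + j \<le> r}. bi_of_poly (l i j) * (Dx1 ^^ i) ((Dx2 ^^ j) F))"

end

theory Submission
  imports Defs "Jordan_Normal_Form.Determinant"
begin

section \<open>Total degree\<close>

lemma tdeg_le_iff1:
  "tdeg p \<le> T \<longleftrightarrow> (\<forall>i. coeff p i \<noteq> 0 \<longrightarrow> i + degree (coeff p i) \<le> T)"
proof -
  let ?S = "{i + degree (coeff p i) | i. i \<le> degree p \<and> coeff p i \<noteq> 0}"
  have "?S = (\<lambda>i. i + degree (coeff p i)) ` {i. i \<le> degree p \<and> coeff p i \<noteq> 0}" by auto
  hence fin: "finite (?S \<union> {0})" by simp
  have "tdeg p \<le> T \<longleftrightarrow> (\<forall>a\<in>?S \<union> {0}. a \<le> T)"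
    unfolding tdeg_def using Max_le_iff[OF fin] by blast
  also have "\<dots> \<longleftrightarrow> (\<forall>i. coeff p i \<noteq> 0 \<longrightarrow> i + degree (coeff p i) \<le> T)"
    using le_degree by fastforce
  finally show ?thesis .
qed

lemma tdeg_le_iff:
  "tdeg p \<le> T \<longleftrightarrow> (\<forall>i j. coeff (coeff p i) j \<noteq> 0 \<longrightarrow> i + j \<le> T)"
proof
  assume a: "tdeg p \<le> T"
  show "\<forall>i j. coeff (coeff p i) j \<noteq> 0 \<longrightarrow> i + j \<le> T"
  proof (intro allI impI)
    fix i j assume h: "coeff (coeff p i) j \<noteq> 0"
    hence "coeff p i \<noteq> 0" by auto
    with a have "i + degree (coeff p i) \<le> T" using tdeg_le_iff1 by blast
    moreover have "j \<le> degree (coeff p i)" using h le_degree by blast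
    ultimately show "i + j \<le> T" by simp
  qed
next
  assume a: "\<forall>i j. coeff (coeff p i) j \<noteq> 0 \<longrightarrow> i + j \<le> T"
  show "tdeg p \<le> T" unfolding tdeg_le_iff1
  proof (intro allI impI)
    fix i assume "coeff p i \<noteq> 0"
    hence "coeff (coeff p i) (degree (coeff p i)) \<noteq> 0" by simp
    thus "i + degree (coeff p i) \<le> T" using a by blast
  qed
qed

lemma tdeg_leI: "(\<And>i j. coeff (coeff p i) j \<noteq> 0 \<Longrightarrow> i + j \<le> T) \<Longrightarrow> tdeg p \<le> T"
  using tdeg_le_iff by blast

lemma tdeg_leD: "tdeg p \<le> T \<Longrightarrow> coeff (coeff p i) j \<noteq> 0 \<Longrightarrow> i + j \<le> T"
  using tdeg_le_iff by blast

lemma tdeg_ge: "coeff (coeff p i) j \<noteq> 0 \<Longrightarrow> i + j \<le> tdeg p"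
  using tdeg_leD[of p "tdeg p"] by blast

lemma tdeg_0[simp]: "tdeg (0::'a::zero bipoly) = 0"
  by (rule le_zero_eq[THEN iffD1], rule tdeg_leI) simp

lemma tdeg_const: "tdeg [:[:c:]:] = 0"
  by (rule le_zero_eq[THEN iffD1], rule tdeg_leI) (auto simp: coeff_pCons split: nat.splits)

lemma tdeg_1[simp]: "tdeg (1::'a::comm_ring_1 bipoly) = 0"
  using tdeg_const[of "1::'a"] by (simp add: one_pCons)

lemma tdeg_of_nat[simp]: "tdeg (of_nat k::'a::comm_ring_1 bipoly) = 0"
  by (simp add: of_nat_poly tdeg_const)

lemma tdeg_add_le: assumes "tdeg p \<le> T" "tdeg q \<le> T" shows "tdeg (p + q) \<le> T"
proof (rule tdeg_leI)
  fix i j assume "coeff (coeff (p + q) i) j \<noteq> 0"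
  hence "coeff (coeff p i) j \<noteq> 0 \<or> coeff (coeff q i) j \<noteq> 0" by auto
  thus "i + j \<le> T" using assms tdeg_leD by blast
qed

lemma tdeg_uminus[simp]: "tdeg (- p) = tdeg (p::'a::comm_ring_1 bipoly)"
proof -
  have "tdeg (- p) \<le> tdeg p" by (rule tdeg_leI) (auto dest: tdeg_ge)
  moreover have "tdeg p \<le> tdeg (- p)"
  proof (rule tdeg_leI)
    fix i j assume "coeff (coeff p i) j \<noteq> 0"
    hence "coeff (coeff (- p) i) j \<noteq> 0" by simp
    thus "i + j \<le> tdeg (- p)" by (rule tdeg_ge)
  qed
  ultimately show ?thesis by simp
qed

lemma tdeg_diff_le: "tdeg p \<le> T \<Longrightarrow> tdeg q \<le> T \<Longrightarrow> tdeg (p - q) \<le> (T::nat)"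
  for p q :: "'a::comm_ring_1 bipoly"
  using tdeg_add_le[of p T "-q"] by simp

lemma tdeg_mono: "tdeg p \<le> T \<Longrightarrow> T \<le> T' \<Longrightarrow> tdeg p \<le> T'" by simp

lemma tdeg_mult: "tdeg (p * q) \<le> tdeg p + tdeg (q::'a::comm_ring_1 bipoly)"
proof (rule tdeg_leI)
  fix n j assume "coeff (coeff (p * q) n) j \<noteq> 0"
  hence "(\<Sum>k\<le>n. coeff (coeff p k * coeff q (n - k)) j) \<noteq> 0"
    by (simp add: coeff_mult coeff_sum)
  then obtain k where k: "k \<le> n" "coeff (coeff p k * coeff q (n - k)) j \<noteq> 0"
    by (rule sum.not_neutral_contains_not_neutral) auto
  hence "(\<Sum>l\<le>j. coeff (coeff p k) l * coeff (coeff q (n - k)) (j - l)) \<noteq> 0"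
    by (simp add: coeff_mult)
  then obtain l where l: "l \<le> j" "coeff (coeff p k) l * coeff (coeff q (n - k)) (j - l) \<noteq> 0"
    by (rule sum.not_neutral_contains_not_neutral) auto
  hence "coeff (coeff p k) l \<noteq> 0" "coeff (coeff q (n - k)) (j - l) \<noteq> 0" by auto
  hence "k + l \<le> tdeg p" "(n - k) + (j - l) \<le> tdeg q" by (auto intro: tdeg_ge)
  thus "n + j \<le> tdeg p + tdeg q" using k(1) l(1) by linarith
qed

lemma tdeg_mult_le: "tdeg p \<le> A \<Longrightarrow> tdeg q \<le> B \<Longrightarrow> tdeg (p * q) \<le> A + (B::nat)"
  for p q :: "'a::comm_ring_1 bipoly"
  using tdeg_mult[of p q] by linarith

lemma tdeg_sum_le: "(\<And>i. i \<in> A \<Longrightarrow> tdeg (f i) \<le> T) \<Longrightarrow> tdeg (sum f A) \<le> T"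
  for f :: "'b \<Rightarrow> 'a::comm_ring_1 bipoly"
proof (induction A rule: infinite_finite_induct)
  case (insert x F) thus ?case by (simp add: tdeg_add_le)
qed simp_all

lemma tdeg_prod_le: "tdeg (prod f A) \<le> (\<Sum>i\<in>A. tdeg (f i::'a::comm_ring_1 bipoly))"
proof (induction A rule: infinite_finite_induct)
  case (insert x F) thus ?case using tdeg_mult[of "f x" "prod f F"] by simp
qed simp_all

lemma tdeg_power: "tdeg (p ^ n) \<le> n * tdeg (p::'a::comm_ring_1 bipoly)"
proof (induction n)
  case (Suc n) thus ?case using tdeg_mult[of p "p^n"] by simp
qed simp

lemma tdeg_power_le: "tdeg p \<le> d \<Longrightarrow> tdeg (p ^ n) \<le> d * (n::nat)"
  for p :: "'a::comm_ring_1 bipoly"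
  using tdeg_power[of p n] by (metis le_trans mult.commute mult_le_mono2)

lemma tdeg_of_nat_mult: "tdeg (of_nat k * p) \<le> tdeg (p::'a::comm_ring_1 bipoly)"
  using tdeg_mult[of "of_nat k" p] by simp

definition pd1 :: "'a::idom bipoly \<Rightarrow> 'a bipoly" where "pd1 p = map_poly pderiv p"
definition pd2 :: "'a::idom bipoly \<Rightarrow> 'a bipoly" where "pd2 p = pderiv p"

lemma tdeg_pd1: "tdeg (pd1 p) \<le> tdeg p"
proof (rule tdeg_leI)
  fix i j assume "coeff (coeff (pd1 p) i) j \<noteq> 0"
  hence "coeff (coeff p i) (Suc j) \<noteq> 0" by (auto simp: pd1_def coeff_map_poly coeff_pderiv)
  from tdeg_ge[OF this] show "i + j \<le> tdeg p" by simp
qed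

lemma tdeg_pd2: "tdeg (pd2 p) \<le> tdeg p"
proof (rule tdeg_leI)
  fix i j assume "coeff (coeff (pd2 p) i) j \<noteq> 0"
  hence "coeff (coeff p (Suc i)) j \<noteq> 0" by (auto simp: pd2_def coeff_pderiv of_nat_poly)
  from tdeg_ge[OF this] show "i + j \<le> tdeg p" by simp
qed

lemma tdeg_signof_mult: "tdeg (signof p * x) \<le> tdeg (x::'a::comm_ring_1 bipoly)"
proof -
  have "sign p = (1::int) \<or> sign p = -1" by (simp add: sign_def)
  then show ?thesis
  proof
    assume h: "sign p = (1::int)" show ?thesis unfolding h by simp
  next
    assume h: "sign p = (-1::int)" show ?thesis unfolding h by simp
  qed
qed

section \<open>Embedding and derivations\<close>

lemma bi_nth: "fps_nth (bi_of_poly p) n = fps_of_poly (coeff p n)"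
  by (simp add: bi_of_poly_def fps_of_poly_nth coeff_map_poly)

lemma bi_add[simp]: "bi_of_poly (p + q) = bi_of_poly p + bi_of_poly q"
  by (rule fps_ext) (simp add: bi_nth fps_of_poly_add)

lemma bi_0[simp]: "bi_of_poly 0 = 0"
  by (rule fps_ext) (simp add: bi_nth)

lemma bi_1[simp]: "bi_of_poly 1 = 1"
  by (rule fps_ext) (simp add: bi_nth coeff_1)

lemma bi_uminus[simp]: "bi_of_poly (- p) = - bi_of_poly (p::'a::comm_ring_1 bipoly)"
  by (rule fps_ext) (simp add: bi_nth fps_of_poly_uminus)

lemma bi_diff[simp]: "bi_of_poly (p - q) = bi_of_poly p - bi_of_poly (q::'a::comm_ring_1 bipoly)"
  using bi_add[of p "-q"] by simp

lemma bi_mult[simp]: "bi_of_poly (p * q) = bi_of_poly p * bi_of_poly (q::'a::comm_ring_1 bipoly)"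
proof (rule fps_ext)
  fix n
  have "fps_nth (bi_of_poly p * bi_of_poly q) n
        = (\<Sum>i=0..n. fps_of_poly (coeff p i) * fps_of_poly (coeff q (n - i)))"
    by (simp add: fps_mult_nth bi_nth)
  also have "\<dots> = fps_of_poly (\<Sum>i=0..n. coeff p i * coeff q (n - i))"
    by (simp add: fps_of_poly_sum fps_of_poly_mult)
  also have "\<dots> = fps_nth (bi_of_poly (p * q)) n"
    by (simp add: bi_nth coeff_mult atLeast0AtMost)
  finally show "fps_nth (bi_of_poly (p * q)) n = fps_nth (bi_of_poly p * bi_of_poly q) n" by simp
qed

lemma bi_power[simp]: "bi_of_poly (p ^ k) = bi_of_poly (p::'a::comm_ring_1 bipoly) ^ k"
  by (induction k) simp_all

lemma bi_of_nat[simp]: "bi_of_poly (of_nat k :: 'a::comm_ring_1 bipoly) = of_nat k"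
  by (induction k) simp_all

lemma bi_sum: "bi_of_poly (sum f A) = (\<Sum>i\<in>A. bi_of_poly (f i::'a::comm_ring_1 bipoly))"
  by (induction A rule: infinite_finite_induct) simp_all

lemma bi_eq0: assumes "bi_of_poly p = 0" shows "p = 0"
proof (rule poly_eqI)
  fix n
  have "fps_of_poly (coeff p n) = 0" using assms bi_nth[of p n] by simp
  thus "coeff p n = coeff 0 n" by (simp add: fps_of_poly_eq_iff[of _ 0, simplified])
qed

lemma Dx1_nth: "fps_nth (Dx1 F) n = fps_deriv (fps_nth F n)"
  by (simp add: Dx1_def)

lemma Dx1_add: "Dx1 (x + y) = Dx1 x + Dx1 y"
  by (rule fps_ext) (simp add: Dx1_nth)

lemma Dx1_mult: "Dx1 (x * y) = Dx1 x * y + x * Dx1 y"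
proof (rule fps_ext)
  fix n
  have "fps_nth (Dx1 (x * y)) n = (\<Sum>i=0..n. fps_deriv (fps_nth x i) * fps_nth y (n - i)
          + fps_nth x i * fps_deriv (fps_nth y (n - i)))"
    unfolding Dx1_nth fps_mult_nth fps_deriv_sum fps_deriv_mult by (simp only: add.commute)
  also have "\<dots> = fps_nth (Dx1 x * y + x * Dx1 y) n"
    unfolding fps_add_nth fps_mult_nth Dx1_nth sum.distrib ..
  finally show "fps_nth (Dx1 (x * y)) n = fps_nth (Dx1 x * y + x * Dx1 y) n" .
qed

lemma Dx1_bi: "Dx1 (bi_of_poly p) = bi_of_poly (pd1 p)"
  by (rule fps_ext) (simp add: Dx1_nth bi_nth pd1_def coeff_map_poly fps_of_poly_pderiv)

lemma fps_of_poly_of_nat': "fps_of_poly (of_nat n) = of_nat n"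
  by (induction n) (simp_all add: fps_of_poly_add)

lemma Dx2_bi: "Dx2 (bi_of_poly p) = bi_of_poly (pd2 p)"
  by (rule fps_ext) (simp add: Dx2_def pd2_def bi_nth fps_deriv_nth coeff_pderiv fps_of_poly_mult fps_of_poly_add fps_of_poly_of_nat')

lemma Dx12_comm: "Dx1 (Dx2 F) = Dx2 (Dx1 F)"
  by (rule fps_ext) (simp add: Dx1_nth Dx2_def fps_deriv_nth fps_deriv_mult)

definition isD :: "('a::idom bifps \<Rightarrow> 'a bifps) \<Rightarrow> ('a bipoly \<Rightarrow> 'a bipoly) \<Rightarrow> bool" where
  "isD D pd \<longleftrightarrow> (\<forall>x y. D (x + y) = D x + D y) \<and> (\<forall>x y. D (x * y) = D x * y + x * D y) \<and>
     (\<forall>p. D (bi_of_poly p) = bi_of_poly (pd p)) \<and> (\<forall>p. tdeg (pd p) \<le> tdeg p)"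

lemma isD_Dx1: "isD Dx1 pd1"
  unfolding isD_def using Dx1_add Dx1_mult Dx1_bi tdeg_pd1 by blast

lemma isD_Dx2: "isD Dx2 pd2"
  unfolding isD_def using Dx2_bi tdeg_pd2 by (auto simp: Dx2_def fps_deriv_mult)

lemma isD_add: "isD D pd \<Longrightarrow> D (x + y) = D x + D y" unfolding isD_def by blast
lemma isD_mult: "isD D pd \<Longrightarrow> D (x * y) = D x * y + x * D y" unfolding isD_def by blast
lemma isD_bi: "isD D pd \<Longrightarrow> D (bi_of_poly p) = bi_of_poly (pd p)" unfolding isD_def by blast
lemma isD_tdeg: "isD D pd \<Longrightarrow> tdeg (pd p) \<le> tdeg p" unfolding isD_def by blast

lemma isD_0: assumes "isD D pd" shows "D 0 = 0"
proof -
  have "D (0 + 0) = D 0 + D 0" by (rule isD_add[OF assms])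
  hence h: "D 0 = D 0 + D 0" by (simp only: add_0)
  have "D 0 + D 0 = D 0 + 0" using h by (metis add_0_right)
  from add_left_imp_eq[OF this] show ?thesis .
qed

lemma isD_1: assumes "isD D pd" shows "D 1 = 0"
proof -
  have "D (1 * 1) = D 1 * 1 + 1 * D 1" by (rule isD_mult[OF assms])
  hence h: "D 1 = D 1 + D 1" by (simp only: mult_1 mult_1_right)
  have "D 1 + D 1 = D 1 + 0" using h by (metis add_0_right)
  from add_left_imp_eq[OF this] show ?thesis .
qed

lemma isD_uminus: "isD D pd \<Longrightarrow> D (- x) = - D x"
  using isD_add[of D pd x "- x"] isD_0[of D pd] by (simp add: eq_neg_iff_add_eq_0 add.commute)

lemma isD_diff: "isD D pd \<Longrightarrow> D (x - y) = D x - D y"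
  using isD_add[of D pd x "- y"] isD_uminus[of D pd y] by simp

lemma isD_sum: "isD D pd \<Longrightarrow> D (sum f A) = (\<Sum>i\<in>A. D (f i))"
  by (induction A rule: infinite_finite_induct) (simp_all add: isD_0 isD_add)

lemma isD_pow: assumes "isD D pd" shows "x * D (x ^ k) = of_nat k * D x * x ^ k"
proof (induction k)
  case 0 thus ?case using isD_1[OF assms] by simp
next
  case (Suc k)
  have "x * D (x ^ Suc k) = x * (D x * x ^ k + x * D (x ^ k))"
    using isD_mult[OF assms, of x "x^k"] by simp
  also have "\<dots> = D x * x ^ Suc k + x * (x * D (x ^ k))" by (simp add: algebra_simps)
  also have "\<dots> = of_nat (Suc k) * D x * x ^ Suc k" unfolding Suc by (simp add: algebra_simps)
  finally show ?case .
qed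

lemma isD_key:
  assumes "isD D pd"
  shows "bi_of_poly p * D (bi_of_poly (p ^ k) * X)
         = of_nat k * bi_of_poly (pd p) * (bi_of_poly (p ^ k) * X) + bi_of_poly (p ^ Suc k) * D X"
proof -
  have "bi_of_poly p * D (bi_of_poly (p ^ k) * X)
        = (bi_of_poly p * D (bi_of_poly p ^ k)) * X + bi_of_poly p * bi_of_poly p ^ k * D X"
    using isD_mult[OF assms, of "bi_of_poly p ^ k" X] by (simp add: algebra_simps)
  also have "\<dots> = of_nat k * bi_of_poly (pd p) * (bi_of_poly (p ^ k) * X) + bi_of_poly (p ^ Suc k) * D X"
    unfolding isD_pow[OF assms] isD_bi[OF assms] by (simp add: algebra_simps)
  finally show ?thesis .
qed

lemma funpow_Dx12_comm1: "Dx1 ((Dx2 ^^ s) F) = (Dx2 ^^ s) (Dx1 F)"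
  by (induction s) (simp_all add: Dx12_comm)

lemma funpow_Dx12_comm: "(Dx1 ^^ i) ((Dx2 ^^ s) F) = (Dx2 ^^ s) ((Dx1 ^^ i) F)"
  by (induction i) (simp_all add: funpow_Dx12_comm1)

section \<open>Spans with degree bounds\<close>

definition SPs :: "'a::idom bifps set \<Rightarrow> nat \<Rightarrow> 'a bifps \<Rightarrow> bool" where
  "SPs B T F \<longleftrightarrow> (\<exists>c. (\<forall>Y. tdeg (c Y) \<le> T) \<and> F = (\<Sum>Y\<in>B. bi_of_poly (c Y) * Y))"

lemma SPs_zero: "SPs B T 0"
  unfolding SPs_def by (rule exI[of _ "\<lambda>_. 0"]) simp

lemma SPs_mono: assumes "SPs B T F" "T \<le> T'" shows "SPs B T' F"
proof -
  obtain c where c: "\<forall>Y. tdeg (c Y) \<le> T" "F = (\<Sum>Y\<in>B. bi_of_poly (c Y) * Y)"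
    using assms(1) unfolding SPs_def by blast
  have "tdeg (c Y) \<le> T'" for Y using c(1)[rule_format, of Y] assms(2) by linarith
  thus ?thesis unfolding SPs_def using c(2) by blast
qed

lemma SPs_add: assumes "SPs B T F" "SPs B T G" shows "SPs B T (F + G)"
proof -
  obtain c where c: "\<forall>Y. tdeg (c Y) \<le> T" "F = (\<Sum>Y\<in>B. bi_of_poly (c Y) * Y)"
    using assms(1) unfolding SPs_def by blast
  obtain d where d: "\<forall>Y. tdeg (d Y) \<le> T" "G = (\<Sum>Y\<in>B. bi_of_poly (d Y) * Y)"
    using assms(2) unfolding SPs_def by blast
  show ?thesis unfolding SPs_def
    by (rule exI[of _ "\<lambda>Y. c Y + d Y"])
       (simp add: c d tdeg_add_le sum.distrib distrib_right)
qed

lemma SPs_uminus: assumes "SPs B T F" shows "SPs B T (- F)"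
proof -
  obtain c where c: "\<forall>Y. tdeg (c Y) \<le> T" "F = (\<Sum>Y\<in>B. bi_of_poly (c Y) * Y)"
    using assms(1) unfolding SPs_def by blast
  show ?thesis unfolding SPs_def
    by (rule exI[of _ "\<lambda>Y. - c Y"]) (simp add: c sum_negf)
qed

lemma SPs_diff: "SPs B T F \<Longrightarrow> SPs B T G \<Longrightarrow> SPs B T (F - G)"
  using SPs_add[of B T F "- G"] SPs_uminus[of B T G] by simp

lemma SPs_smult: assumes "SPs B T F" "tdeg q \<le> Q" shows "SPs B (Q + T) (bi_of_poly q * F)"
proof -
  obtain c where c: "\<forall>Y. tdeg (c Y) \<le> T" "F = (\<Sum>Y\<in>B. bi_of_poly (c Y) * Y)"
    using assms(1) unfolding SPs_def by blast
  show ?thesis unfolding SPs_def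
    by (rule exI[of _ "\<lambda>Y. q * c Y"])
       (simp add: c sum_distrib_left mult.assoc tdeg_mult_le assms(2))
qed

lemma SPs_elem: assumes "finite B" "Y \<in> B" "tdeg q \<le> T" shows "SPs B T (bi_of_poly q * Y)"
  unfolding SPs_def
proof (rule exI[of _ "\<lambda>Z. if Z = Y then q else 0"], intro conjI allI)
  fix Z show "tdeg (if Z = Y then q else 0) \<le> T" using assms by simp
next
  have "(\<Sum>Z\<in>B. bi_of_poly (if Z = Y then q else 0) * Z) = (\<Sum>Z\<in>B. if Z = Y then bi_of_poly q * Y else 0)"
    by (rule sum.cong) auto
  also have "\<dots> = bi_of_poly q * Y" using assms by simp
  finally show "bi_of_poly q * Y = (\<Sum>Z\<in>B. bi_of_poly (if Z = Y then q else 0) * Z)" by simp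
qed

lemma SPs_elem1: "finite B \<Longrightarrow> Y \<in> B \<Longrightarrow> SPs B T Y"
  using SPs_elem[of B Y 1 T] by simp

lemma SPs_sum: "finite I \<Longrightarrow> (\<And>i. i \<in> I \<Longrightarrow> SPs B T (F i)) \<Longrightarrow> SPs B T (\<Sum>i\<in>I. F i)"
  by (induction I rule: finite_induct) (simp_all add: SPs_zero SPs_add)

lemma SPs_subset: assumes "finite B'" "B \<subseteq> B'" "SPs B T F" shows "SPs B' T F"
proof -
  obtain c where c: "\<forall>Y. tdeg (c Y) \<le> T" "F = (\<Sum>Y\<in>B. bi_of_poly (c Y) * Y)"
    using assms(3) unfolding SPs_def by blast
  have "F = (\<Sum>Y\<in>B'. bi_of_poly (if Y \<in> B then c Y else 0) * Y)"
    unfolding c(2) by (rule sum.mono_neutral_cong_left) (use assms in auto)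
  thus ?thesis unfolding SPs_def using c(1)
    by (intro exI[of _ "\<lambda>Y. if Y \<in> B then c Y else 0"]) simp
qed

lemma SPs_subst:
  assumes "finite B" "SPs B T F" "\<And>Y. Y \<in> B \<Longrightarrow> SPs B' T' (bi_of_poly q * Y)"
  shows "SPs B' (T + T') (bi_of_poly q * F)"
proof -
  obtain c where c: "\<forall>Y. tdeg (c Y) \<le> T" "F = (\<Sum>Y\<in>B. bi_of_poly (c Y) * Y)"
    using assms(2) unfolding SPs_def by blast
  have "bi_of_poly q * F = (\<Sum>Y\<in>B. bi_of_poly (c Y) * (bi_of_poly q * Y))"
    unfolding c(2) sum_distrib_left by (simp add: algebra_simps)
  also have "SPs B' (T + T') \<dots>"
    using assms(1) by (rule SPs_sum) (use SPs_smult[OF assms(3)] c(1) in auto)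
  finally show ?thesis .
qed

lemma SPs_deriv:
  assumes D: "isD D pd" and fin: "finite B" "finite B'" and sub: "B \<subseteq> B'"
    and F: "SPs B T F" and DY: "\<And>Y. Y \<in> B \<Longrightarrow> SPs B' T0 (bi_of_poly q * D Y)"
    and q: "tdeg q \<le> dq"
  shows "SPs B' (T + max dq T0) (bi_of_poly q * D F)"
proof -
  obtain c where c: "\<forall>Y. tdeg (c Y) \<le> T" "F = (\<Sum>Y\<in>B. bi_of_poly (c Y) * Y)"
    using F unfolding SPs_def by blast
  have "bi_of_poly q * D F = (\<Sum>Y\<in>B. bi_of_poly (q * pd (c Y)) * Y + bi_of_poly (c Y) * (bi_of_poly q * D Y))"
    unfolding c(2) isD_sum[OF D] sum_distrib_left
    by (rule sum.cong) (simp_all add: isD_mult[OF D] isD_bi[OF D] algebra_simps)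
  also have "SPs B' (T + max dq T0) \<dots>"
  proof (rule SPs_sum[OF fin(1)], rule SPs_add)
    fix Y assume Y: "Y \<in> B"
    have "tdeg (q * pd (c Y)) \<le> dq + T"
      using tdeg_mult_le[OF q order_trans[OF isD_tdeg[OF D] c(1)[rule_format]]] .
    thus "SPs B' (T + max dq T0) (bi_of_poly (q * pd (c Y)) * Y)"
      using SPs_elem[OF fin(2)] Y sub by (metis add.commute le_trans max.cobounded1 add_le_mono1 subsetD)
    show "SPs B' (T + max dq T0) (bi_of_poly (c Y) * (bi_of_poly q * D Y))"
      using SPs_smult[OF DY[OF Y] c(1)[rule_format]] by (rule SPs_mono) simp
  qed
  finally show ?thesis .
qed

lemma SPs_reduce:
  assumes D: "isD D pd" and p: "tdeg p \<le> d" and r: "0 < r"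
    and R: "SPs ((\<lambda>i. (D ^^ i) h) ` {..<r}) d (bi_of_poly p * (D ^^ r) h)"
  shows "SPs ((\<lambda>i. (D ^^ i) h) ` {..<r}) (d * a) (bi_of_poly (p ^ a) * (D ^^ a) h)"
proof (induction a)
  case 0
  have "h \<in> (\<lambda>i. (D ^^ i) h) ` {..<r}" using r by (intro image_eqI[of _ _ 0]) simp_all
  thus ?case using SPs_elem1[of "(\<lambda>i. (D ^^ i) h) ` {..<r}" h "d * 0"] by simp
next
  case (Suc a)
  let ?B = "(\<lambda>i. (D ^^ i) h) ` {..<r}"
  have fin: "finite ?B" by simp
  have DY: "SPs ?B d (bi_of_poly p * D Y)" if "Y \<in> ?B" for Y
  proof -
    from that obtain i where i: "i < r" "Y = (D ^^ i) h" by auto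
    show ?thesis
    proof (cases "Suc i < r")
      case True
      hence "D Y \<in> ?B" using i by (intro image_eqI[of _ _ "Suc i"]) simp_all
      thus ?thesis using SPs_elem[OF fin _ p] by blast
    next
      case False
      hence "Suc i = r" using i by simp
      thus ?thesis using R i by auto
    qed
  qed
  have t1: "SPs ?B (d * a + max d d) (bi_of_poly p * D (bi_of_poly (p ^ a) * (D ^^ a) h))"
    by (rule SPs_deriv[OF D fin fin subset_refl Suc.IH DY p])
  have "tdeg (of_nat a * pd p) \<le> d"
    by (rule order_trans[OF tdeg_of_nat_mult order_trans[OF isD_tdeg[OF D] p]])
  from SPs_smult[OF Suc.IH this]
  have t2: "SPs ?B (d + d * a) (bi_of_poly (of_nat a * pd p) * (bi_of_poly (p ^ a) * (D ^^ a) h))" .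
  have "SPs ?B (d * Suc a) (bi_of_poly p * D (bi_of_poly (p ^ a) * (D ^^ a) h)
           - bi_of_poly (of_nat a * pd p) * (bi_of_poly (p ^ a) * (D ^^ a) h))"
    using SPs_mono[OF t1, of "d * Suc a"] SPs_mono[OF t2, of "d * Suc a"] by (intro SPs_diff) simp_all
  also have "bi_of_poly p * D (bi_of_poly (p ^ a) * (D ^^ a) h)
           - bi_of_poly (of_nat a * pd p) * (bi_of_poly (p ^ a) * (D ^^ a) h)
           = bi_of_poly (p ^ Suc a) * (D ^^ Suc a) h"
    unfolding isD_key[OF D, of p a "(D ^^ a) h"] by simp
  finally show ?case .
qed

lemma SPs_lift:
  assumes D: "isD D pd" and p: "tdeg p \<le> d" and fin: "finite B"
    and H: "SPs B T (bi_of_poly (p ^ e) * H)"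
  shows "SPs ((\<lambda>(s, Y). (D ^^ s) Y) ` ({..b} \<times> B)) (T + d * b) (bi_of_poly (p ^ (e + b)) * (D ^^ b) H)"
proof (induction b)
  case 0
  have "B \<subseteq> (\<lambda>(s, Y). (D ^^ s) Y) ` ({..0} \<times> B)"
  proof
    fix Y assume "Y \<in> B"
    thus "Y \<in> (\<lambda>(s, Y). (D ^^ s) Y) ` ({..0} \<times> B)" by (intro image_eqI[of _ _ "(0, Y)"]) simp_all
  qed
  thus ?case using SPs_subset[OF _ _ H] fin by simp
next
  case (Suc b)
  let ?Bb = "(\<lambda>(s, Y). (D ^^ s) Y) ` ({..b} \<times> B)"
  let ?Bb' = "(\<lambda>(s, Y). (D ^^ s) Y) ` ({..Suc b} \<times> B)"
  have finb: "finite ?Bb" "finite ?Bb'" using fin by simp_all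
  have sub: "?Bb \<subseteq> ?Bb'" by (intro image_mono Sigma_mono) auto
  have DY: "SPs ?Bb' d (bi_of_poly p * D Y)" if "Y \<in> ?Bb" for Y
  proof -
    from that obtain s Z where sZ: "s \<le> b" "Z \<in> B" "Y = (D ^^ s) Z" by auto
    hence "D Y \<in> ?Bb'" by (intro image_eqI[of _ _ "(Suc s, Z)"]) simp_all
    thus ?thesis using SPs_elem[OF finb(2) _ p] by blast
  qed
  have t1: "SPs ?Bb' (T + d * b + max d d) (bi_of_poly p * D (bi_of_poly (p ^ (e + b)) * (D ^^ b) H))"
    by (rule SPs_deriv[OF D finb sub Suc.IH DY p])
  have "tdeg (of_nat (e + b) * pd p) \<le> d"
    by (rule order_trans[OF tdeg_of_nat_mult order_trans[OF isD_tdeg[OF D] p]])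
  from SPs_subset[OF finb(2) sub SPs_smult[OF Suc.IH this]]
  have t2: "SPs ?Bb' (d + (T + d * b)) (bi_of_poly (of_nat (e + b) * pd p) * (bi_of_poly (p ^ (e + b)) * (D ^^ b) H))" .
  have "SPs ?Bb' (T + d * Suc b) (bi_of_poly p * D (bi_of_poly (p ^ (e + b)) * (D ^^ b) H)
           - bi_of_poly (of_nat (e + b) * pd p) * (bi_of_poly (p ^ (e + b)) * (D ^^ b) H))"
    using SPs_mono[OF t1, of "T + d * Suc b"] SPs_mono[OF t2, of "T + d * Suc b"] by (intro SPs_diff) simp_all
  also have "bi_of_poly p * D (bi_of_poly (p ^ (e + b)) * (D ^^ b) H)
           - bi_of_poly (of_nat (e + b) * pd p) * (bi_of_poly (p ^ (e + b)) * (D ^^ b) H)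
           = bi_of_poly (p ^ (e + Suc b)) * (D ^^ Suc b) H"
    unfolding isD_key[OF D, of p "e + b" "(D ^^ b) H"] by simp
  finally show ?case .
qed

lemma SPs_key:
  fixes f :: "'a::idom bifps"
  assumes p1: "tdeg p1 \<le> d" and p2: "tdeg p2 \<le> d" and r1: "0 < r1" and r2: "0 < r2"
    and R1: "SPs ((\<lambda>i. (Dx1 ^^ i) f) ` {..<r1}) d (bi_of_poly p1 * (Dx1 ^^ r1) f)"
    and R2: "SPs ((\<lambda>j. (Dx2 ^^ j) f) ` {..<r2}) d (bi_of_poly p2 * (Dx2 ^^ r2) f)"
  shows "SPs ((\<lambda>(i, j). (Dx1 ^^ i) ((Dx2 ^^ j) f)) ` ({..<r1} \<times> {..<r2})) (2 * d * (a + b))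
           (bi_of_poly ((p1 * p2) ^ (a + b)) * (Dx1 ^^ a) ((Dx2 ^^ b) f))"
proof -
  let ?B1 = "(\<lambda>i. (Dx1 ^^ i) f) ` {..<r1}"
  let ?B2 = "(\<lambda>j. (Dx2 ^^ j) f) ` {..<r2}"
  let ?Bs = "(\<lambda>(i, j). (Dx1 ^^ i) ((Dx2 ^^ j) f)) ` ({..<r1} \<times> {..<r2})"
  have finBs: "finite ?Bs" by simp
  have A2: "SPs ?B2 (d * s) (bi_of_poly (p2 ^ s) * (Dx2 ^^ s) f)" for s
    by (rule SPs_reduce[OF isD_Dx2 p2 r2 R2])
  have sub2: "(\<lambda>(t, Y). (Dx1 ^^ t) Y) ` ({..i} \<times> ?B2) \<subseteq> ?Bs" if "i < r1" for i
  proof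
    fix Z assume "Z \<in> (\<lambda>(t, Y). (Dx1 ^^ t) Y) ` ({..i} \<times> ?B2)"
    then obtain t j where tj: "t \<le> i" "j < r2" "Z = (Dx1 ^^ t) ((Dx2 ^^ j) f)" by auto
    thus "Z \<in> ?Bs" using that by (intro image_eqI[of _ _ "(t, j)"]) simp_all
  qed
  have C2: "SPs ?Bs (d * s + d * i) (bi_of_poly (p2 ^ (s + i)) * (Dx1 ^^ i) ((Dx2 ^^ s) f))"
    if "i < r1" for i s
    by (rule SPs_subset[OF finBs sub2[OF that] SPs_lift[OF isD_Dx1 p2 _ A2]]) simp
  have P: "bi_of_poly ((p1 * p2) ^ (a + b)) = bi_of_poly (p1 ^ (a + b)) * bi_of_poly (p2 ^ (a + b))"
    by (simp add: power_mult_distrib)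
  show ?thesis
  proof (cases "a < r1")
    case True
    have "SPs ?Bs (d * (a + b) + (d * b + d * a)) (bi_of_poly (p1 ^ (a + b)) * (bi_of_poly (p2 ^ (b + a)) * (Dx1 ^^ a) ((Dx2 ^^ b) f)))"
      by (rule SPs_smult[OF C2[OF True] tdeg_power_le[OF p1]])
    hence "SPs ?Bs (2 * d * (a + b)) (bi_of_poly (p1 ^ (a + b)) * (bi_of_poly (p2 ^ (b + a)) * (Dx1 ^^ a) ((Dx2 ^^ b) f)))"
      by (rule SPs_mono) (simp add: algebra_simps)
    thus ?thesis unfolding P by (simp add: algebra_simps)
  next
    case False
    have A1: "SPs ?B1 (d * a) (bi_of_poly (p1 ^ a) * (Dx1 ^^ a) f)"
      by (rule SPs_reduce[OF isD_Dx1 p1 r1 R1])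
    have L: "SPs ((\<lambda>(s, Y). (Dx2 ^^ s) Y) ` ({..b} \<times> ?B1)) (d * a + d * b)
               (bi_of_poly (p1 ^ (a + b)) * (Dx2 ^^ b) ((Dx1 ^^ a) f))"
      by (rule SPs_lift[OF isD_Dx2 p1 _ A1]) simp
    have S: "SPs ?Bs (d * (a + b)) (bi_of_poly (p2 ^ (a + b)) * Z)"
      if "Z \<in> (\<lambda>(s, Y). (Dx2 ^^ s) Y) ` ({..b} \<times> ?B1)" for Z
    proof -
      from that obtain s i where si: "s \<le> b" "i < r1" "Z = (Dx2 ^^ s) ((Dx1 ^^ i) f)" by auto
      have "s + i \<le> a + b" using si False by simp
      then obtain k where k: "a + b = s + i + k" using le_Suc_ex by blast
      have "SPs ?Bs (d * k + (d * s + d * i)) (bi_of_poly (p2 ^ k) * (bi_of_poly (p2 ^ (s + i)) * (Dx1 ^^ i) ((Dx2 ^^ s) f)))"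
        by (rule SPs_smult[OF C2[OF si(2)] tdeg_power_le[OF p2]])
      hence "SPs ?Bs (d * (a + b)) (bi_of_poly (p2 ^ k) * (bi_of_poly (p2 ^ (s + i)) * (Dx1 ^^ i) ((Dx2 ^^ s) f)))"
        by (rule SPs_mono) (simp add: k algebra_simps)
      thus ?thesis unfolding k si(3) funpow_Dx12_comm
        by (simp add: algebra_simps power_add)
    qed
    have "SPs ?Bs (d * a + d * b + d * (a + b)) (bi_of_poly (p2 ^ (a + b)) * (bi_of_poly (p1 ^ (a + b)) * (Dx2 ^^ b) ((Dx1 ^^ a) f)))"
      by (rule SPs_subst[OF _ L S]) simp
    hence "SPs ?Bs (2 * d * (a + b)) (bi_of_poly (p2 ^ (a + b)) * (bi_of_poly (p1 ^ (a + b)) * (Dx2 ^^ b) ((Dx1 ^^ a) f)))"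
      by (rule SPs_mono) (simp add: algebra_simps)
    thus ?thesis unfolding P funpow_Dx12_comm by (simp add: algebra_simps)
  qed
qed

section \<open>Cramer-type lemma with degree bounds\<close>

lemma tdeg_det:
  fixes B :: "'a::comm_ring_1 bipoly mat"
  assumes B: "B \<in> carrier_mat k k" and e: "\<And>i j. i < k \<Longrightarrow> j < k \<Longrightarrow> tdeg (B $$ (i, j)) \<le> D"
  shows "tdeg (det B) \<le> k * D"
  unfolding det_def'[OF B]
proof (rule tdeg_sum_le)
  fix p assume "p \<in> {p. p permutes {0..<k}}"
  hence p: "p permutes {0..<k}" by simp
  have "tdeg (\<Prod>i = 0..<k. B $$ (i, p i)) \<le> (\<Sum>i = 0..<k. tdeg (B $$ (i, p i)))"
    by (rule tdeg_prod_le)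
  also have "\<dots> \<le> (\<Sum>i = 0..<k. D)"
    by (rule sum_mono) (use e permutes_in_image[OF p] in auto)
  finally have "tdeg (\<Prod>i = 0..<k. B $$ (i, p i)) \<le> k * D" by simp
  thus "tdeg (signof p * (\<Prod>i = 0..<k. B $$ (i, p i))) \<le> k * D"
    using tdeg_signof_mult order_trans by blast
qed

lemma tdeg_neg1pow_mult: "tdeg ((-1) ^ k * x) \<le> tdeg (x::'a::comm_ring_1 bipoly)"
proof (cases "even k")
  case True thus ?thesis by simp
next
  case False thus ?thesis by simp
qed

definition subm :: "(nat \<Rightarrow> nat \<Rightarrow> 'a) \<Rightarrow> nat list \<Rightarrow> nat list \<Rightarrow> 'a mat" where
  "subm A I J = mat (length I) (length J) (\<lambda>(s, t). A (I ! s) (J ! t))"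

lemma cramer_nat:
  fixes A :: "nat \<Rightarrow> nat \<Rightarrow> 'a::comm_ring_1 bipoly"
  assumes nm: "n \<le> m" and degA: "\<And>i k. i < n \<Longrightarrow> k \<le> m \<Longrightarrow> tdeg (A i k) \<le> D"
  shows "\<exists>a. (\<exists>k\<le>m. a k \<noteq> 0) \<and> (\<forall>k. tdeg (a k) \<le> n * D) \<and> (\<forall>i<n. (\<Sum>k\<le>m. a k * A i k) = 0)"
proof -
  define good where "good I J \<longleftrightarrow> distinct I \<and> distinct J \<and> set I \<subseteq> {..<n} \<and> set J \<subseteq> {..m}
      \<and> length I = length J \<and> det (subm A I J) \<noteq> 0" for I J
  define K where "K = {k. \<exists>I J. good I J \<and> length I = k}"
  have "subm A [] [] = 1\<^sub>m 0" by (rule eq_matI) (simp_all add: subm_def)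
  hence "good [] []" unfolding good_def by simp
  hence K0: "0 \<in> K" unfolding K_def by force
  have Kb: "K \<subseteq> {..n}"
  proof
    fix k assume "k \<in> K"
    then obtain I J where "good I J" "length I = k" unfolding K_def by blast
    hence "distinct I" "set I \<subseteq> {..<n}" "length I = k" unfolding good_def by auto
    have "card (set I) \<le> card {..<n}" by (rule card_mono) (use \<open>set I \<subseteq> {..<n}\<close> in auto)
    moreover have "card (set I) = k" using \<open>distinct I\<close> \<open>length I = k\<close> distinct_card by blast
    ultimately show "k \<in> {..n}" by simp
  qed
  have finK: "finite K" using Kb finite_subset by blast
  define \<rho> where "\<rho> = Max K"
  have \<rho>K: "\<rho> \<in> K" unfolding \<rho>_def using finK K0 Max_in by blast
  have \<rho>max: "k \<in> K \<Longrightarrow> k \<le> \<rho>" for k unfolding \<rho>_def using finK by simp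
  have \<rho>n: "\<rho> \<le> n" using \<rho>K Kb by auto
  obtain I J where IJ: "good I J" "length I = \<rho>" using \<rho>K unfolding K_def by blast
  have I: "distinct I" "set I \<subseteq> {..<n}" and J: "distinct J" "set J \<subseteq> {..m}" "length J = \<rho>"
    and detIJ: "det (subm A I J) \<noteq> 0"
    using IJ unfolding good_def by auto
  have "\<not> {..m} \<subseteq> set J"
  proof
    assume "{..m} \<subseteq> set J"
    hence "card {..m} \<le> card (set J)" by (intro card_mono) simp_all
    thus False using J distinct_card[of J] \<rho>n nm by simp
  qed
  then obtain c where c: "c \<le> m" "c \<notin> set J" by auto
  define JJ where "JJ = J @ [c]"
  have JJlen: "length JJ = Suc \<rho>" using J by (simp add: JJ_def)
  have JJm: "JJ ! t \<le> m" if "t < Suc \<rho>" for t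
    using that J c by (auto simp: JJ_def nth_append subset_iff)
  define N where "N r = subm A (I @ [r]) JJ" for r
  have Ncar: "N r \<in> carrier_mat (Suc \<rho>) (Suc \<rho>)" for r
    using IJ JJlen by (simp add: N_def subm_def)
  have Nidx: "N r $$ (s, t) = A ((I @ [r]) ! s) (JJ ! t)" if "s < Suc \<rho>" "t < Suc \<rho>" for r s t
    using that IJ JJlen by (simp add: N_def subm_def)
  define cof where "cof t = cofactor (N 0) \<rho> t" for t
  have del_eq: "mat_delete (N r) \<rho> t = mat_delete (N 0) \<rho> t" for r t
    by (rule eq_matI) (auto simp: mat_delete_def N_def subm_def nth_append IJ(2) JJlen)
  have cof_eq: "cofactor (N r) \<rho> t = cof t" for r t
    unfolding cof_def cofactor_def by (rule arg_cong[OF arg_cong[OF del_eq[of r t]]])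
  have det0: "det (N r) = 0" if r: "r < n" for r
  proof (cases "r \<in> set I")
    case True
    then obtain s where s: "s < \<rho>" "I ! s = r" using IJ(2) by (auto simp: in_set_conv_nth)
    show ?thesis
    proof (rule det_identical_rows[OF Ncar, of s \<rho>])
      show "row (N r) s = row (N r) \<rho>"
      proof (rule eq_vecI)
        fix j assume "j < dim_vec (row (N r) \<rho>)"
        hence j: "j < Suc \<rho>" using Ncar[of r] by simp
        have "(I @ [r]) ! s = (I @ [r]) ! \<rho>" using s IJ(2) by (simp add: nth_append)
        thus "row (N r) s $ j = row (N r) \<rho> $ j"
          using j s Ncar[of r] by (simp add: Nidx)
      qed simp
    qed (use s in auto)
  next
    case False
    show ?thesis
    proof (rule ccontr)
      assume dn: "det (N r) \<noteq> 0"
      have "distinct (I @ [r])" using I(1) False by simp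
      moreover have "distinct JJ" using J(1) c(2) by (simp add: JJ_def)
      moreover have "set (I @ [r]) \<subseteq> {..<n}" using I(2) r by auto
      moreover have "set JJ \<subseteq> {..m}" using J(2) c(1) by (auto simp: JJ_def)
      moreover have "length (I @ [r]) = length JJ" using IJ(2) JJlen by simp
      ultimately have "good (I @ [r]) JJ" using dn unfolding good_def N_def by blast
      hence "Suc \<rho> \<in> K" unfolding K_def using IJ(2) by force
      thus False using \<rho>max by fastforce
    qed
  qed
  have lap: "det (N r) = (\<Sum>t<Suc \<rho>. A r (JJ ! t) * cof t)" for r
    using laplace_expansion_row[OF Ncar, of \<rho> r]
    by (simp add: Nidx cof_eq nth_append IJ(2))
  define a where "a k = (\<Sum>t<Suc \<rho>. if JJ ! t = k then cof t else 0)" for k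
  have sum_eq: "(\<Sum>k\<le>m. a k * A r k) = (\<Sum>t<Suc \<rho>. A r (JJ ! t) * cof t)" for r
  proof -
    have "(\<Sum>k\<le>m. a k * A r k) = (\<Sum>k\<le>m. \<Sum>t<Suc \<rho>. if k = JJ ! t then cof t * A r k else 0)"
      unfolding a_def sum_distrib_right by (intro sum.cong refl) (auto)
    also have "\<dots> = (\<Sum>t<Suc \<rho>. \<Sum>k\<le>m. if k = JJ ! t then cof t * A r k else 0)"
      by (rule sum.swap)
    also have "\<dots> = (\<Sum>t<Suc \<rho>. A r (JJ ! t) * cof t)"
      by (intro sum.cong refl) (use JJm in \<open>auto simp: mult.commute\<close>)
    finally show ?thesis .
  qed
  have sol: "\<forall>i<n. (\<Sum>k\<le>m. a k * A i k) = 0"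
    using sum_eq lap det0 by simp
  have del_sub: "mat_delete (N 0) \<rho> \<rho> = subm A I J"
    by (rule eq_matI) (auto simp: mat_delete_def N_def subm_def nth_append IJ(2) JJlen J(3) JJ_def)
  have "a c = cof \<rho>"
  proof -
    have "a c = (\<Sum>t<Suc \<rho>. if t = \<rho> then cof t else 0)"
      unfolding a_def
    proof (intro sum.cong refl)
      fix t assume "t \<in> {..<Suc \<rho>}"
      hence "t < Suc \<rho>" by simp
      moreover have "t < \<rho> \<Longrightarrow> J ! t \<noteq> c" using c J(3) nth_mem by blast
      ultimately show "(if JJ ! t = c then cof t else 0) = (if t = \<rho> then cof t else 0)"
        by (auto simp: JJ_def nth_append J(3))
    qed
    also have "\<dots> = cof \<rho>" by simp
    finally show ?thesis .
  qed
  also have "cof \<rho> = det (subm A I J)"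
    unfolding cof_def cofactor_def del_sub by (simp add: mult_2[symmetric] power_mult)
  finally have nz: "a c \<noteq> 0" using detIJ by simp
  have degcof: "tdeg (cof t) \<le> n * D" if "t < Suc \<rho>" for t
  proof -
    have "mat_delete (N 0) \<rho> t \<in> carrier_mat \<rho> \<rho>" using mat_delete_carrier[OF Ncar[of 0], of \<rho> t] by simp
    hence "tdeg (det (mat_delete (N 0) \<rho> t)) \<le> \<rho> * D"
    proof (rule tdeg_det)
      fix i j assume ij: "i < \<rho>" "j < \<rho>"
      have dims: "dim_row (N 0) = Suc \<rho>" "dim_col (N 0) = Suc \<rho>" using Ncar[of 0] by auto
      have "mat_delete (N 0) \<rho> t $$ (i, j) = N 0 $$ (i, if j < t then j else Suc j)"
        using ij by (simp add: mat_delete_def dims)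
      also have "\<dots> = A (I ! i) (JJ ! (if j < t then j else Suc j))"
        using ij by (subst Nidx) (auto simp: nth_append IJ(2))
      finally have "mat_delete (N 0) \<rho> t $$ (i, j) = A (I ! i) (JJ ! (if j < t then j else Suc j))" .
      moreover have "I ! i < n" using I ij IJ(2) nth_mem by blast
      moreover have "JJ ! (if j < t then j else Suc j) \<le> m" using ij JJm by simp
      ultimately show "tdeg (mat_delete (N 0) \<rho> t $$ (i, j)) \<le> D" using degA by simp
    qed
    moreover have "\<rho> * D \<le> n * D" using \<rho>n by simp
    moreover have "tdeg (cof t) \<le> tdeg (det (mat_delete (N 0) \<rho> t))"
      unfolding cof_def cofactor_def by (rule tdeg_neg1pow_mult)
    ultimately show ?thesis by linarith
  qed
  have deg: "tdeg (a k) \<le> n * D" for k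
    unfolding a_def by (rule tdeg_sum_le) (use degcof in auto)
  show ?thesis using nz c(1) deg sol by blast
qed

lemma cramer:
  fixes M :: "nat \<Rightarrow> 'r \<Rightarrow> 'a::comm_ring_1 bipoly"
  assumes fin: "finite R" and card: "card R \<le> m"
    and deg: "\<And>k y. k \<le> m \<Longrightarrow> y \<in> R \<Longrightarrow> tdeg (M k y) \<le> D"
  shows "\<exists>a. (\<exists>k\<le>m. a k \<noteq> 0) \<and> (\<forall>k. tdeg (a k) \<le> card R * D) \<and> (\<forall>y\<in>R. (\<Sum>k\<le>m. a k * M k y) = 0)"
proof -
  obtain xs where xs: "set xs = R" "distinct xs" using finite_distinct_list[OF fin] by blast
  have len: "length xs = card R" using xs distinct_card by fastforce
  obtain a where a: "\<exists>k\<le>m. a k \<noteq> 0" "\<forall>k. tdeg (a k) \<le> length xs * D"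
      "\<forall>i<length xs. (\<Sum>k\<le>m. a k * M k (xs ! i)) = 0"
  proof -
    have l: "length xs \<le> m" using len card by simp
    have d: "tdeg (M k (xs ! i)) \<le> D" if "i < length xs" "k \<le> m" for i k
      using deg[of k "xs ! i"] nth_mem[OF that(1)] xs(1) that(2) by simp
    show ?thesis using cramer_nat[of "length xs" m "\<lambda>i k. M k (xs ! i)" D, OF l d] that by blast
  qed
  have "\<forall>y\<in>R. (\<Sum>k\<le>m. a k * M k y) = 0"
    using a(3) xs(1) by (auto simp: in_set_conv_nth)
  thus ?thesis using a(1,2) len by auto
qed

section \<open>Assembling annihilators\<close>

lemma finish:
  fixes D :: "'a::idom bifps \<Rightarrow> 'a bifps"
  assumes fin: "finite Bs" and card: "card Bs \<le> m" and P: "P \<noteq> 0"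
    and S: "\<And>k. k \<le> m \<Longrightarrow> SPs Bs Dg (bi_of_poly P * (D ^^ k) g)"
  shows "\<exists>A. nonzero_op A \<and> ord_deg_bounded A m (m * Dg) \<and> (\<Sum>j\<le>m. bi_of_poly (A j) * (D ^^ j) g) = 0"
proof -
  have "\<forall>k. \<exists>c. k \<le> m \<longrightarrow> (\<forall>Y. tdeg (c Y) \<le> Dg) \<and> bi_of_poly P * (D ^^ k) g = (\<Sum>Y\<in>Bs. bi_of_poly (c Y) * Y)"
    using S unfolding SPs_def by blast
  then obtain C where C: "\<And>k. k \<le> m \<Longrightarrow> (\<forall>Y. tdeg (C k Y) \<le> Dg) \<and> bi_of_poly P * (D ^^ k) g = (\<Sum>Y\<in>Bs. bi_of_poly (C k Y) * Y)"
    by metis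
  have Cd: "\<And>k y. k \<le> m \<Longrightarrow> y \<in> Bs \<Longrightarrow> tdeg (C k y) \<le> Dg" using C by blast
  obtain a where a0: "(\<exists>k\<le>m. a k \<noteq> 0) \<and> (\<forall>k. tdeg (a k) \<le> card Bs * Dg) \<and> (\<forall>y\<in>Bs. (\<Sum>k\<le>m. a k * C k y) = 0)"
    using cramer[OF fin card Cd] by (rule exE)
  note a = conjunct1[OF a0] conjunct1[OF conjunct2[OF a0]] conjunct2[OF conjunct2[OF a0]]
  define A where "A j = (if j \<le> m then a j else 0)" for j
  have "bi_of_poly P * (\<Sum>j\<le>m. bi_of_poly (A j) * (D ^^ j) g) = (\<Sum>j\<le>m. bi_of_poly (a j) * (bi_of_poly P * (D ^^ j) g))"
    unfolding sum_distrib_left by (intro sum.cong refl) (simp add: A_def algebra_simps)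
  also have "\<dots> = (\<Sum>j\<le>m. \<Sum>Y\<in>Bs. bi_of_poly (a j * C j Y) * Y)"
  proof (intro sum.cong refl)
    fix j assume "j \<in> {..m}"
    hence "bi_of_poly P * (D ^^ j) g = (\<Sum>Y\<in>Bs. bi_of_poly (C j Y) * Y)" using C by simp
    thus "bi_of_poly (a j) * (bi_of_poly P * (D ^^ j) g) = (\<Sum>Y\<in>Bs. bi_of_poly (a j * C j Y) * Y)"
      by (simp add: sum_distrib_left mult.assoc)
  qed
  also have "\<dots> = (\<Sum>Y\<in>Bs. bi_of_poly (\<Sum>j\<le>m. a j * C j Y) * Y)"
    by (subst sum.swap) (simp add: bi_sum sum_distrib_right)
  also have "\<dots> = 0" using a(3) by simp
  finally have z: "bi_of_poly P * (\<Sum>j\<le>m. bi_of_poly (A j) * (D ^^ j) g) = 0" .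
  have "bi_of_poly P \<noteq> 0" using P bi_eq0 by blast
  hence "(\<Sum>j\<le>m. bi_of_poly (A j) * (D ^^ j) g) = 0" using z by simp
  moreover have "nonzero_op A" using a(1) unfolding nonzero_op_def A_def by auto
  moreover have "ord_deg_bounded A m (m * Dg)" unfolding ord_deg_bounded_def
  proof (intro conjI allI impI)
    fix j
    have "card Bs * Dg \<le> m * Dg" using card by simp
    thus "tdeg (A j) \<le> m * Dg" unfolding A_def using a(2)[rule_format, of j] by (auto intro: order_trans)
  qed (simp add: A_def)
  ultimately show ?thesis by blast
qed

definition RS :: "'a::idom bifps \<Rightarrow> nat \<Rightarrow> 'a bifps set" where
  "RS f n = (\<lambda>(a, b). (Dx1 ^^ a) ((Dx2 ^^ b) f)) ` {(a, b). a + b \<le> n}"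

lemma fin_pairs: "finite {(a, b). a + b \<le> (n::nat)}"
  by (rule finite_subset[of _ "{..n} \<times> {..n}"]) auto

lemma finite_RS: "finite (RS f n)"
  unfolding RS_def using fin_pairs by simp

lemma RS_mono: "n \<le> n' \<Longrightarrow> RS f n \<subseteq> RS f n'"
  unfolding RS_def by (intro image_mono) auto

lemma RS_mem: "a + b \<le> n \<Longrightarrow> (Dx1 ^^ a) ((Dx2 ^^ b) f) \<in> RS f n"
  unfolding RS_def by (intro image_eqI[of _ _ "(a, b)"]) simp_all

lemma g_RS:
  assumes "\<forall>i j. tdeg (L i j) \<le> dL"
  shows "SPs (RS f rL) dL (apply_op12 L rL f)"
  unfolding apply_op12_def
proof (rule SPs_sum[OF fin_pairs])
  fix x assume "x \<in> {(i, j). i + j \<le> rL}"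
  then obtain i j where x: "x = (i, j)" "i + j \<le> rL" by auto
  show "SPs (RS f rL) dL (case x of (i, j) \<Rightarrow> bi_of_poly (L i j) * (Dx1 ^^ i) ((Dx2 ^^ j) f))"
    using SPs_elem[OF finite_RS RS_mem[OF x(2)], of "L i j" dL] assms x(1) by simp
qed

lemma D1_RS: assumes "SPs (RS f n) T G" shows "SPs (RS f (n + k)) T ((Dx1 ^^ k) G)"
proof (induction k)
  case 0 thus ?case using assms by simp
next
  case (Suc k)
  have DY: "SPs (RS f (n + Suc k)) 0 (bi_of_poly 1 * Dx1 Y)" if "Y \<in> RS f (n + k)" for Y
  proof -
    from that obtain a b where ab: "a + b \<le> n + k" "Y = (Dx1 ^^ a) ((Dx2 ^^ b) f)" unfolding RS_def by auto
    hence "Dx1 Y = (Dx1 ^^ Suc a) ((Dx2 ^^ b) f)" by simp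
    moreover have "Suc a + b \<le> n + Suc k" using ab by simp
    ultimately have "Dx1 Y \<in> RS f (n + Suc k)" using RS_mem by metis
    thus ?thesis using SPs_elem[OF finite_RS, of "Dx1 Y" f "n + Suc k" 1 0] by simp
  qed
  have "SPs (RS f (n + Suc k)) (T + max 0 0) (bi_of_poly 1 * Dx1 ((Dx1 ^^ k) G))"
    by (rule SPs_deriv[OF isD_Dx1 finite_RS finite_RS RS_mono Suc.IH DY]) simp_all
  thus ?case by simp
qed

lemma D2_RS: assumes "SPs (RS f n) T G" shows "SPs (RS f (n + k)) T ((Dx2 ^^ k) G)"
proof (induction k)
  case 0 thus ?case using assms by simp
next
  case (Suc k)
  have DY: "SPs (RS f (n + Suc k)) 0 (bi_of_poly 1 * Dx2 Y)" if "Y \<in> RS f (n + k)" for Y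
  proof -
    from that obtain a b where ab: "a + b \<le> n + k" "Y = (Dx1 ^^ a) ((Dx2 ^^ b) f)" unfolding RS_def by auto
    have "(Dx1 ^^ a) ((Dx2 ^^ Suc b) f) = (Dx2 ^^ Suc b) ((Dx1 ^^ a) f)" by (rule funpow_Dx12_comm)
    also have "\<dots> = Dx2 ((Dx2 ^^ b) ((Dx1 ^^ a) f))" by simp
    also have "\<dots> = Dx2 Y" using ab(2) funpow_Dx12_comm[of a b f] by simp
    finally have "Dx2 Y = (Dx1 ^^ a) ((Dx2 ^^ Suc b) f)" by simp
    moreover have "a + Suc b \<le> n + Suc k" using ab by simp
    ultimately have "Dx2 Y \<in> RS f (n + Suc k)" using RS_mem by metis
    thus ?thesis using SPs_elem[OF finite_RS, of "Dx2 Y" f "n + Suc k" 1 0] by simp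
  qed
  have "SPs (RS f (n + Suc k)) (T + max 0 0) (bi_of_poly 1 * Dx2 ((Dx2 ^^ k) G))"
    by (rule SPs_deriv[OF isD_Dx2 finite_RS finite_RS RS_mono Suc.IH DY]) simp_all
  thus ?case by simp
qed

lemma clear_RS:
  fixes f :: "'a::idom bifps"
  assumes p1: "tdeg p1 \<le> d" and p2: "tdeg p2 \<le> d" and r1: "0 < r1" and r2: "0 < r2"
    and R1: "SPs ((\<lambda>i. (Dx1 ^^ i) f) ` {..<r1}) d (bi_of_poly p1 * (Dx1 ^^ r1) f)"
    and R2: "SPs ((\<lambda>j. (Dx2 ^^ j) f) ` {..<r2}) d (bi_of_poly p2 * (Dx2 ^^ r2) f)"
    and nE: "n \<le> E" and Y: "Y \<in> RS f n"
  shows "SPs ((\<lambda>(i, j). (Dx1 ^^ i) ((Dx2 ^^ j) f)) ` ({..<r1} \<times> {..<r2})) (2 * d * E)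
           (bi_of_poly ((p1 * p2) ^ E) * Y)"
proof -
  from Y obtain a b where ab: "a + b \<le> n" "Y = (Dx1 ^^ a) ((Dx2 ^^ b) f)" unfolding RS_def by auto
  then obtain k where k: "E = a + b + k" using nE le_Suc_ex[of "a + b" E] by auto
  have P: "tdeg (p1 * p2) \<le> 2 * d" using tdeg_mult_le[OF p1 p2] by simp
  have "SPs ((\<lambda>(i, j). (Dx1 ^^ i) ((Dx2 ^^ j) f)) ` ({..<r1} \<times> {..<r2})) (2 * d * k + 2 * d * (a + b))
           (bi_of_poly ((p1 * p2) ^ k) * (bi_of_poly ((p1 * p2) ^ (a + b)) * Y))"
    unfolding ab(2) by (rule SPs_smult[OF SPs_key[OF p1 p2 r1 r2 R1 R2] tdeg_power_le[OF P]])
  hence "SPs ((\<lambda>(i, j). (Dx1 ^^ i) ((Dx2 ^^ j) f)) ` ({..<r1} \<times> {..<r2})) (2 * d * E)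
           (bi_of_poly ((p1 * p2) ^ k) * (bi_of_poly ((p1 * p2) ^ (a + b)) * Y))"
    by (rule SPs_mono) (simp add: k algebra_simps)
  thus ?thesis unfolding k by (simp add: power_add algebra_simps)
qed

lemma order_rel:
  fixes D :: "'a::idom bifps \<Rightarrow> 'a bifps"
  assumes nz: "nonzero_op L" and ob: "ord_deg_bounded L r d" and z: "(\<Sum>j\<le>r. bi_of_poly (L j) * (D ^^ j) f) = 0"
  shows "\<exists>r1\<le>r. L r1 \<noteq> 0 \<and> bi_of_poly (L r1) * (D ^^ r1) f = - (\<Sum>j<r1. bi_of_poly (L j) * (D ^^ j) f)"
proof -
  have zero: "\<And>j. r < j \<Longrightarrow> L j = 0" using ob unfolding ord_deg_bounded_def by blast
  have fin: "finite {j. L j \<noteq> 0}" by (rule finite_subset[of _ "{..r}"]) (use zero in \<open>auto simp: not_less[symmetric]\<close>)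
  have ne: "{j. L j \<noteq> 0} \<noteq> {}" using nz unfolding nonzero_op_def by blast
  define r1 where "r1 = Max {j. L j \<noteq> 0}"
  have Lr1: "L r1 \<noteq> 0" unfolding r1_def using Max_in[OF fin ne] by blast
  have r1r: "r1 \<le> r" using Lr1 zero not_less by blast
  have above: "L j = 0" if "r1 < j" for j
    using that Max_ge[OF fin, of j] unfolding r1_def by (metis mem_Collect_eq not_le)
  have "0 = (\<Sum>j\<le>r. bi_of_poly (L j) * (D ^^ j) f)" using z by simp
  also have "\<dots> = (\<Sum>j\<le>r1. bi_of_poly (L j) * (D ^^ j) f)"
    by (rule sum.mono_neutral_right) (use r1r above in auto)
  also have "\<dots> = (\<Sum>j<r1. bi_of_poly (L j) * (D ^^ j) f) + bi_of_poly (L r1) * (D ^^ r1) f"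
    by (simp add: lessThan_Suc_atMost[symmetric])
  finally have "bi_of_poly (L r1) * (D ^^ r1) f = - (\<Sum>j<r1. bi_of_poly (L j) * (D ^^ j) f)"
    by (simp add: eq_neg_iff_add_eq_0 add.commute)
  thus ?thesis using Lr1 r1r by blast
qed

lemma rel_SPs:
  fixes D :: "'a::idom bifps \<Rightarrow> 'a bifps"
  assumes "\<forall>j. tdeg (L j) \<le> d" and "bi_of_poly p * (D ^^ r) f = - (\<Sum>j<r. bi_of_poly (L j) * (D ^^ j) f)"
  shows "SPs ((\<lambda>i. (D ^^ i) f) ` {..<r}) d (bi_of_poly p * (D ^^ r) f)"
  unfolding assms(2)
  by (intro SPs_uminus SPs_sum) (use assms(1) in \<open>auto intro!: SPs_elem\<close>)

lemma funpow_zero_D: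
  fixes D :: "'a::idom bifps \<Rightarrow> 'a bifps"
  assumes "isD D pd" shows "(D ^^ k) 0 = 0"
  by (induction k) (simp_all add: isD_0[OF assms])

lemma ord_deg_bounded_mono: "ord_deg_bounded A r d \<Longrightarrow> d \<le> d' \<Longrightarrow> ord_deg_bounded A r d'"
  unfolding ord_deg_bounded_def using le_trans by blast

theorem lemma3p17:
  fixes f :: "'a::field_char_0 bifps"
    and L1 L2 :: "nat \<Rightarrow> 'a bipoly"
    and L :: "nat \<Rightarrow> nat \<Rightarrow> 'a bipoly"
    and r_f d_f r_L d_L :: nat
  assumes "nonzero_op L1" and "ord_deg_bounded L1 r_f d_f" and "apply_op1 L1 r_f f = 0"
    and "nonzero_op L2" and "ord_deg_bounded L2 r_f d_f" and "apply_op2 L2 r_f f = 0"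
    and "\<forall>i j. r_L < i + j \<longrightarrow> L i j = 0"
    and "\<forall>i j. tdeg (L i j) \<le> d_L"
  shows "\<exists>A1 A2 r_g d_g.
           r_g \<le> r_f ^ 2 \<and> d_g \<le> (d_L + 2 * d_f * (r_f ^ 2 + r_L)) * r_f ^ 2 \<and>
           nonzero_op A1 \<and> ord_deg_bounded A1 r_g d_g \<and>
           apply_op1 A1 r_g (apply_op12 L r_L f) = 0 \<and>
           nonzero_op A2 \<and> ord_deg_bounded A2 r_g d_g \<and>
           apply_op2 A2 r_g (apply_op12 L r_L f) = 0"
proof -
  let ?g = "apply_op12 L r_L f"
  have g0: ?thesis if f0: "f = 0"
  proof -
    have "?g = 0" unfolding apply_op12_def f0
      by (simp add: funpow_zero_D[OF isD_Dx1] funpow_zero_D[OF isD_Dx2])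
    define A :: "nat \<Rightarrow> 'a bipoly" where "A j = (if j = 0 then 1 else 0)" for j
    have "nonzero_op A" unfolding nonzero_op_def A_def by auto
    moreover have "ord_deg_bounded A 0 0" unfolding ord_deg_bounded_def A_def by simp
    moreover have "apply_op1 A 0 ?g = 0" "apply_op2 A 0 ?g = 0"
      unfolding apply_op1_def apply_op2_def using \<open>?g = 0\<close> by simp_all
    ultimately show ?thesis by (intro exI[of _ A] exI[of _ 0]) simp
  qed
  have dL1: "\<forall>j. tdeg (L1 j) \<le> d_f" and dL2: "\<forall>j. tdeg (L2 j) \<le> d_f"
    using assms(2,5) unfolding ord_deg_bounded_def by blast+
  obtain r1 where r1: "r1 \<le> r_f" "L1 r1 \<noteq> 0"
    "bi_of_poly (L1 r1) * (Dx1 ^^ r1) f = - (\<Sum>j<r1. bi_of_poly (L1 j) * (Dx1 ^^ j) f)"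
    using order_rel[OF assms(1,2), of Dx1 f] assms(3) unfolding apply_op1_def by blast
  obtain r2 where r2: "r2 \<le> r_f" "L2 r2 \<noteq> 0"
    "bi_of_poly (L2 r2) * (Dx2 ^^ r2) f = - (\<Sum>j<r2. bi_of_poly (L2 j) * (Dx2 ^^ j) f)"
    using order_rel[OF assms(4,5), of Dx2 f] assms(6) unfolding apply_op2_def by blast
  show ?thesis
  proof (cases "r1 = 0 \<or> r2 = 0")
    case True
    have "f = 0"
    proof (cases "r1 = 0")
      case True
      hence "bi_of_poly (L1 r1) * f = 0" using r1(3) by simp
      moreover have "bi_of_poly (L1 r1) \<noteq> 0" using r1(2) bi_eq0 by blast
      ultimately show ?thesis by simp
    next
      case False
      hence "r2 = 0" using \<open>r1 = 0 \<or> r2 = 0\<close> by simp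
      hence "bi_of_poly (L2 r2) * f = 0" using r2(3) by simp
      moreover have "bi_of_poly (L2 r2) \<noteq> 0" using r2(2) bi_eq0 by blast
      ultimately show ?thesis by simp
    qed
    thus ?thesis by (rule g0)
  next
    case False
    hence r1p: "0 < r1" and r2p: "0 < r2" by auto
    define p1 where "p1 = L1 r1"
    define p2 where "p2 = L2 r2"
    have p1d: "tdeg p1 \<le> d_f" and p2d: "tdeg p2 \<le> d_f" using dL1 dL2 by (simp_all add: p1_def p2_def)
    have R1: "SPs ((\<lambda>i. (Dx1 ^^ i) f) ` {..<r1}) d_f (bi_of_poly p1 * (Dx1 ^^ r1) f)"
      unfolding p1_def by (rule rel_SPs[OF dL1 r1(3)])
    have R2: "SPs ((\<lambda>j. (Dx2 ^^ j) f) ` {..<r2}) d_f (bi_of_poly p2 * (Dx2 ^^ r2) f)"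
      unfolding p2_def by (rule rel_SPs[OF dL2 r2(3)])
    define m where "m = r1 * r2"
    define E where "E = r_L + m"
    define Bs where "Bs = (\<lambda>(i, j). (Dx1 ^^ i) ((Dx2 ^^ j) f)) ` ({..<r1} \<times> {..<r2})"
    define Dg where "Dg = d_L + 2 * d_f * E"
    have finBs: "finite Bs" unfolding Bs_def by simp
    have cardBs: "card Bs \<le> m" unfolding Bs_def m_def
      using card_image_le[of "{..<r1} \<times> {..<r2}" "\<lambda>(i, j). (Dx1 ^^ i) ((Dx2 ^^ j) f)"]
      by (simp add: card_cartesian_product)
    have Pnz: "(p1 * p2) ^ E \<noteq> 0" using r1(2) r2(2) by (simp add: p1_def p2_def)
    have gRS: "SPs (RS f r_L) d_L ?g" by (rule g_RS[OF assms(8)])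
    have clr: "SPs Bs (2 * d_f * E) (bi_of_poly ((p1 * p2) ^ E) * Y)" if "Y \<in> RS f (r_L + k)" "k \<le> m" for Y k
      unfolding Bs_def by (rule clear_RS[OF p1d p2d r1p r2p R1 R2 _ that(1)]) (use that(2) in \<open>simp add: E_def\<close>)
    have S1: "SPs Bs Dg (bi_of_poly ((p1 * p2) ^ E) * (Dx1 ^^ k) ?g)" if "k \<le> m" for k
      unfolding Dg_def by (rule SPs_subst[OF finite_RS D1_RS[OF gRS] clr[OF _ that]])
    have S2: "SPs Bs Dg (bi_of_poly ((p1 * p2) ^ E) * (Dx2 ^^ k) ?g)" if "k \<le> m" for k
      unfolding Dg_def by (rule SPs_subst[OF finite_RS D2_RS[OF gRS] clr[OF _ that]])
    obtain A1 where A1: "nonzero_op A1" "ord_deg_bounded A1 m (m * Dg)"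
        "(\<Sum>j\<le>m. bi_of_poly (A1 j) * (Dx1 ^^ j) ?g) = 0"
      using finish[OF finBs cardBs Pnz S1] by blast
    obtain A2 where A2: "nonzero_op A2" "ord_deg_bounded A2 m (m * Dg)"
        "(\<Sum>j\<le>m. bi_of_poly (A2 j) * (Dx2 ^^ j) ?g) = 0"
      using finish[OF finBs cardBs Pnz S2] by blast
    have mr: "m \<le> r_f ^ 2" unfolding m_def power2_eq_square using r1(1) r2(1) by (rule mult_le_mono)
    have "Dg \<le> d_L + 2 * d_f * (r_f ^ 2 + r_L)" unfolding Dg_def E_def using mr by simp
    hence mD: "m * Dg \<le> (d_L + 2 * d_f * (r_f ^ 2 + r_L)) * r_f ^ 2"
      using mult_le_mono[OF mr] by (metis mult.commute)
    show ?thesis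
      apply (rule exI[of _ A1], rule exI[of _ A2], rule exI[of _ m],
             rule exI[of _ "(d_L + 2 * d_f * (r_f ^ 2 + r_L)) * r_f ^ 2"])
      using mr A1 A2 ord_deg_bounded_mono[OF A1(2) mD] ord_deg_bounded_mono[OF A2(2) mD]
      unfolding apply_op1_def apply_op2_def by simp
  qed
qed

end
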